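(* Let $A_m(x)=R_{2m}(x)$ and $B_m(x)=R_{2m+1}(x)$. For every integer $m\ge 3$, \[ A_m(x)=(1+x+x^2)A_{m-1}(x)-x^2A_{m-2}(x),\qquad B_m(x)=(1+x+x^2)B_{m-1}(x)-x^2B_{m-2}(x). \]
   Context: For $n\ge1$ let $\Xi_n$ be the poset on $\{x_1,\dots,x_n\}$ whose cover relations are exactly: $x_2\prec x_1$, $x_3\prec x_2$, and for $3\le i\le n-1$, $x_i\prec x_{i+1}$ if $i$ is odd and $x_{i+1}\prec x_i$ if $i$ is even (so $x_1>x_2>x_3<x_4>x_5<\cdots$). A filter of a poset is an up-closed subset. $\Omega_n$ is the lattice of filters of $\Xi_n$ under reverse inclusion; $\Omega_0$ is the one-element lattice. $R_n(x)=\sum_{F\in\Omega_n}x^{\,n-|F|}$ is the rank generating function of $\Omega_n$, with $R_0(x)=1$. *)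

theory Defs
  imports "HOL-Computational_Algebra.Polynomial"
begin

text \<open>The poset Xi_n on the elements x_1..x_n, represented by the indices 1..n.
  A pair (i,j) in xi_covers n means x_i is covered by x_j (x_i \<prec> x_j).\<close>
definition xi_covers :: "nat \<Rightarrow> (nat \<times> nat) set" where
  "xi_covers n =
     (if 2 \<le> n then {(2,1)} else {}) \<union>
     (if 3 \<le> n then {(3,2)} else {}) \<union>
     {(i, i+1) | i. 3 \<le> i \<and> i \<le> n - 1 \<and> odd i} \<union>
     {(i+1, i) | i. 3 \<le> i \<and> i \<le> n - 1 \<and> even i}"

definition xi_le :: "nat \<Rightarrow> nat \<Rightarrow> nat \<Rightarrow> bool" where
  "xi_le n i j \<longleftrightarrow> i \<in> {1..n} \<and> j \<in> {1..n} \<and> (i, j) \<in> (xi_covers n)\<^sup>*"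

definition xi_filters :: "nat \<Rightarrow> nat set set" where
  "xi_filters n = {F. F \<subseteq> {1..n} \<and> (\<forall>i\<in>F. \<forall>j. xi_le n i j \<longrightarrow> j \<in> F)}"

text \<open>Rank generating function of Omega_n (filters under reverse inclusion).\<close>
definition R :: "nat \<Rightarrow> int poly" where
  "R n = (\<Sum>F\<in>xi_filters n. monom 1 (n - card F))"

definition A :: "nat \<Rightarrow> int poly" where "A m = R (2*m)"
definition B :: "nat \<Rightarrow> int poly" where "B m = R (2*m+1)"

end

theory Submission imports Defs begin

lemma covers_range: "(i,j) \<in> xi_covers n \<Longrightarrow> i \<in> {1..n} \<and> j \<in> {1..n}"
  unfolding xi_covers_def by (auto split: if_splits)

lemma filters_alt: "xi_filters n = {F. F \<subseteq> {1..n} \<and> (\<forall>i j. (i,j) \<in> xi_covers n \<longrightarrow> i \<in> F \<longrightarrow> j \<in> F)}"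
proof (intro set_eqI iffI)
  fix F assume "F \<in> xi_filters n"
  then show "F \<in> {F. F \<subseteq> {1..n} \<and> (\<forall>i j. (i,j) \<in> xi_covers n \<longrightarrow> i \<in> F \<longrightarrow> j \<in> F)}"
    unfolding xi_filters_def xi_le_def using covers_range by blast
next
  fix F assume F: "F \<in> {F. F \<subseteq> {1..n} \<and> (\<forall>i j. (i,j) \<in> xi_covers n \<longrightarrow> i \<in> F \<longrightarrow> j \<in> F)}"
  have "j \<in> F" if "(i,j) \<in> (xi_covers n)\<^sup>*" "i \<in> F" for i j
    using that
  proof (induction rule: rtrancl_induct)
    case base then show ?case by simp
  next
    case (step y z) then show ?case using F by blast
  qed
  then show "F \<in> xi_filters n" using F unfolding xi_filters_def xi_le_def by blast
qed

definition edge :: "nat \<Rightarrow> nat \<times> nat" where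
  "edge n = (if 3 \<le> n \<and> odd n then (n, Suc n) else (Suc n, n))"

lemma covers_mem: "(i,j) \<in> xi_covers n \<longleftrightarrow> (n\<ge>2 \<and> i=2 \<and> j=1) \<or> (n\<ge>3 \<and> i=3 \<and> j=2) \<or> (3\<le>i \<and> i+1\<le>n \<and> odd i \<and> j=i+1) \<or> (3\<le>j \<and> j+1 \<le> n \<and> even j \<and> i=j+1)"
  unfolding xi_covers_def by auto

lemma covers_Suc: "n \<ge> 1 \<Longrightarrow> xi_covers (Suc n) = insert (edge n) (xi_covers n)"
proof (rule set_eqI)
  fix p :: "nat \<times> nat" assume n: "n \<ge> 1"
  obtain i j where p: "p = (i,j)" by fastforce
  show "p \<in> xi_covers (Suc n) \<longleftrightarrow> p \<in> insert (edge n) (xi_covers n)"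
  proof (cases "3 \<le> n \<and> odd n")
    case True
    then have ed: "edge n = (n, Suc n)" by (simp add: edge_def)
    show ?thesis unfolding p insert_iff covers_mem ed prod.inject using n True by presburger
  next
    case False
    then have ed: "edge n = (Suc n, n)" by (simp add: edge_def)
    show ?thesis unfolding p insert_iff covers_mem ed prod.inject using n False by presburger
  qed
qed

lemma filters_sub: "F \<in> xi_filters n \<Longrightarrow> F \<subseteq> {1..n}"
  unfolding xi_filters_def by blast

lemma filters_Suc: "n \<ge> 1 \<Longrightarrow> F \<in> xi_filters (Suc n) \<longleftrightarrow>
   F \<subseteq> {1..Suc n} \<and> (F - {Suc n}) \<in> xi_filters n \<and> (fst (edge n) \<in> F \<longrightarrow> snd (edge n) \<in> F)"
proof -
  assume n: "n \<ge> 1"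
  obtain a b where ab: "edge n = (a,b)" by fastforce
  have e: "(i,j) \<in> xi_covers n \<Longrightarrow> (i \<in> F - {Suc n} \<longleftrightarrow> i \<in> F) \<and> (j \<in> F - {Suc n} \<longleftrightarrow> j \<in> F)" for i j
    using covers_range[of i j n] by auto
  have L: "F \<in> xi_filters (Suc n) \<longleftrightarrow> F \<subseteq> {1..Suc n} \<and> (a \<in> F \<longrightarrow> b \<in> F) \<and>
     (\<forall>i j. (i,j) \<in> xi_covers n \<longrightarrow> i \<in> F \<longrightarrow> j \<in> F)"
  proof -
    have "(\<forall>i j. (i,j) \<in> insert (a,b) (xi_covers n) \<longrightarrow> i \<in> F \<longrightarrow> j \<in> F) \<longleftrightarrow>
      (a \<in> F \<longrightarrow> b \<in> F) \<and> (\<forall>i j. (i,j) \<in> xi_covers n \<longrightarrow> i \<in> F \<longrightarrow> j \<in> F)"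
      by auto
    then show ?thesis unfolding filters_alt covers_Suc[OF n] ab mem_Collect_eq by simp
  qed
  have R: "(F - {Suc n}) \<in> xi_filters n \<longleftrightarrow> F - {Suc n} \<subseteq> {1..n} \<and>
     (\<forall>i j. (i,j) \<in> xi_covers n \<longrightarrow> i \<in> F \<longrightarrow> j \<in> F)"
    unfolding filters_alt mem_Collect_eq using e by meson
  have S: "F \<subseteq> {1..Suc n} \<Longrightarrow> F - {Suc n} \<subseteq> {1..n}" by auto
  show ?thesis unfolding L R ab fst_conv snd_conv using S by blast
qed

lemma filters_finite: "finite (xi_filters n)"
  by (rule finite_subset[of _ "Pow {1..n}"]) (use filters_sub in auto)

lemma up1: assumes "3 \<le> n" "odd n"
  shows "{F \<in> xi_filters (Suc n). Suc n \<in> F} = insert (Suc n) ` xi_filters n"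
proof -
  have n: "n \<ge> 1" using assms by simp
  have ed: "edge n = (n, Suc n)" using assms by (simp add: edge_def)
  show ?thesis
  proof (intro set_eqI iffI)
    fix F assume "F \<in> {F \<in> xi_filters (Suc n). Suc n \<in> F}"
    then have "F - {Suc n} \<in> xi_filters n" "F = insert (Suc n) (F - {Suc n})"
      using filters_Suc[OF n] by auto
    then show "F \<in> insert (Suc n) ` xi_filters n" by blast
  next
    fix F assume "F \<in> insert (Suc n) ` xi_filters n"
    then obtain G where G: "G \<in> xi_filters n" "F = insert (Suc n) G" by blast
    then have "G \<subseteq> {1..n}" using filters_sub by blast
    then have "F - {Suc n} = G" "F \<subseteq> {1..Suc n}" using G by auto
    then show "F \<in> {F \<in> xi_filters (Suc n). Suc n \<in> F}"
      using filters_Suc[OF n, of F] G ed by auto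
  qed
qed

lemma up0: assumes "3 \<le> n" "odd n"
  shows "{F \<in> xi_filters (Suc n). Suc n \<notin> F} = {G \<in> xi_filters n. n \<notin> G}"
proof -
  have n: "n \<ge> 1" using assms by simp
  have ed: "edge n = (n, Suc n)" using assms by (simp add: edge_def)
  show ?thesis
  proof (intro set_eqI iffI)
    fix F assume "F \<in> {F \<in> xi_filters (Suc n). Suc n \<notin> F}"
    then show "F \<in> {G \<in> xi_filters n. n \<notin> G}"
      using filters_Suc[OF n, of F] ed by auto
  next
    fix F assume F: "F \<in> {G \<in> xi_filters n. n \<notin> G}"
    then have "F \<subseteq> {1..n}" using filters_sub by blast
    then have "F - {Suc n} = F" "F \<subseteq> {1..Suc n}" "Suc n \<notin> F" by auto
    then show "F \<in> {F \<in> xi_filters (Suc n). Suc n \<notin> F}"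
      using filters_Suc[OF n, of F] F ed by auto
  qed
qed

lemma down1: assumes "n \<ge> 1" "\<not> (3 \<le> n \<and> odd n)"
  shows "{F \<in> xi_filters (Suc n). Suc n \<in> F} = insert (Suc n) ` {G \<in> xi_filters n. n \<in> G}"
proof -
  note n = assms(1)
  have ed: "edge n = (Suc n, n)" using assms by (simp add: edge_def)
  show ?thesis
  proof (intro set_eqI iffI)
    fix F assume "F \<in> {F \<in> xi_filters (Suc n). Suc n \<in> F}"
    then have "F - {Suc n} \<in> xi_filters n" "F = insert (Suc n) (F - {Suc n})" "n \<in> F - {Suc n}"
      using filters_Suc[OF n] ed by auto
    then show "F \<in> insert (Suc n) ` {G \<in> xi_filters n. n \<in> G}" by blast
  next
    fix F assume "F \<in> insert (Suc n) ` {G \<in> xi_filters n. n \<in> G}"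
    then obtain G where G: "G \<in> xi_filters n" "F = insert (Suc n) G" "n \<in> G" by blast
    then have "G \<subseteq> {1..n}" using filters_sub by blast
    then have "F - {Suc n} = G" "F \<subseteq> {1..Suc n}" using G by auto
    then show "F \<in> {F \<in> xi_filters (Suc n). Suc n \<in> F}"
      using filters_Suc[OF n, of F] G ed by auto
  qed
qed

lemma down0: assumes "n \<ge> 1" "\<not> (3 \<le> n \<and> odd n)"
  shows "{F \<in> xi_filters (Suc n). Suc n \<notin> F} = xi_filters n"
proof -
  note n = assms(1)
  have ed: "edge n = (Suc n, n)" using assms by (simp add: edge_def)
  show ?thesis
  proof (intro set_eqI iffI)
    fix F assume "F \<in> {F \<in> xi_filters (Suc n). Suc n \<notin> F}"
    then show "F \<in> xi_filters n"
      using filters_Suc[OF n, of F] ed by auto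
  next
    fix F assume F: "F \<in> xi_filters n"
    then have "F \<subseteq> {1..n}" using filters_sub by blast
    then have "F - {Suc n} = F" "F \<subseteq> {1..Suc n}" "Suc n \<notin> F" by auto
    then show "F \<in> {F \<in> xi_filters (Suc n). Suc n \<notin> F}"
      using filters_Suc[OF n, of F] F ed by auto
  qed
qed

definition PP :: "nat \<Rightarrow> int poly" where
  "PP n = (\<Sum>F\<in>{F \<in> xi_filters n. n \<in> F}. monom 1 (n - card F))"
definition QQ :: "nat \<Rightarrow> int poly" where
  "QQ n = (\<Sum>F\<in>{F \<in> xi_filters n. n \<notin> F}. monom 1 (n - card F))"

lemma R_PQ: "R n = PP n + QQ n"
proof -
  have "xi_filters n = {F \<in> xi_filters n. n \<in> F} \<union> {F \<in> xi_filters n. n \<notin> F}" by blast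
  then have "R n = (\<Sum>F\<in>{F \<in> xi_filters n. n \<in> F} \<union> {F \<in> xi_filters n. n \<notin> F}. monom 1 (n - card F))"
    unfolding R_def by simp
  also have "\<dots> = PP n + QQ n" unfolding PP_def QQ_def
    by (rule sum.union_disjoint) (use filters_finite in auto)
  finally show ?thesis .
qed

lemma card_le: "F \<in> xi_filters n \<Longrightarrow> card F \<le> n"
  using card_mono[OF _ filters_sub[of F n]] by simp

lemma fin: "F \<in> xi_filters n \<Longrightarrow> finite F"
  using filters_sub[of F n] finite_subset by blast

lemma monom_Suc: "card F \<le> n \<Longrightarrow> (monom 1 (Suc n - card F) :: int poly) = monom 1 1 * monom 1 (n - card F)"
  by (simp add: mult_monom Suc_diff_le)

lemma sum_ins: assumes "S \<subseteq> xi_filters n"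
  shows "(\<Sum>F\<in>insert (Suc n) ` S. monom 1 (Suc n - card F)) = (\<Sum>F\<in>S. (monom 1 (n - card F) :: int poly))"
proof -
  have nin: "Suc n \<notin> G" if "G \<in> S" for G
  proof -
    have "G \<in> xi_filters n" using that assms by blast
    then show ?thesis using filters_sub[of G n] by fastforce
  qed
  have "inj_on (insert (Suc n)) S"
  proof (rule inj_onI)
    fix G H assume "G \<in> S" "H \<in> S" "insert (Suc n) G = insert (Suc n) H"
    then show "G = H" using nin by (metis insert_ident)
  qed
  then have "(\<Sum>F\<in>insert (Suc n) ` S. monom 1 (Suc n - card F)) = (\<Sum>G\<in>S. (monom 1 (Suc n - card (insert (Suc n) G)) :: int poly))"
    by (simp add: sum.reindex)
  also have "\<dots> = (\<Sum>F\<in>S. (monom 1 (n - card F) :: int poly))"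
    by (rule sum.cong) (use nin fin assms in auto)
  finally show ?thesis .
qed

lemma sum_same: assumes "S \<subseteq> xi_filters n"
  shows "(\<Sum>F\<in>S. monom 1 (Suc n - card F)) = monom 1 1 * (\<Sum>F\<in>S. (monom 1 (n - card F) :: int poly))"
  unfolding sum_distrib_left
proof (rule sum.cong)
  fix x assume "x \<in> S"
  then have "card x \<le> n" by (meson assms card_le subsetD)
  then show "monom 1 (Suc n - card x) = monom 1 1 * (monom 1 (n - card x) :: int poly)" by (rule monom_Suc)
qed simp

lemma up: assumes "3 \<le> n" "odd n"
  shows "PP (Suc n) = PP n + QQ n" "QQ (Suc n) = monom 1 1 * QQ n"
proof -
  have "PP (Suc n) = R n"
    unfolding PP_def up1[OF assms] sum_ins[OF order_refl] R_def ..
  then show "PP (Suc n) = PP n + QQ n" by (simp add: R_PQ)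
  show "QQ (Suc n) = monom 1 1 * QQ n"
    unfolding QQ_def up0[OF assms] by (rule sum_same) auto
qed

lemma down: assumes "1 \<le> n" "\<not> (3 \<le> n \<and> odd n)"
  shows "PP (Suc n) = PP n" "QQ (Suc n) = monom 1 1 * (PP n + QQ n)"
proof -
  show "PP (Suc n) = PP n"
    unfolding PP_def down1[OF assms] by (rule sum_ins) auto
  have "QQ (Suc n) = monom 1 1 * R n"
    unfolding QQ_def down0[OF assms] R_def by (rule sum_same) auto
  then show "QQ (Suc n) = monom 1 1 * (PP n + QQ n)" by (simp add: R_PQ)
qed

lemma polys: "[:1, 1, 1:] = (1 + monom 1 1 + monom 1 1 * monom 1 1 :: int poly)"
  "(monom 1 2 :: int poly) = monom 1 1 * monom 1 1"
  by (simp add: monom_altdef one_pCons) (simp add: mult_monom numeral_2_eq_2)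

lemma rec_du: fixes X p0 q0 :: "'a::comm_ring_1"
  assumes "p1 = p0" "q1 = X*(p0+q0)" "p2 = p1+q1" "q2 = X*q1" "p3 = p2" "q3 = X*(p2+q2)" "p4 = p3+q3" "q4 = X*q3"
  shows "p4+q4 = (1+X+X*X)*(p2+q2) - X*X*(p0+q0)"
  unfolding assms by (simp add: algebra_simps)
lemma rec_ud: fixes X p0 q0 :: "'a::comm_ring_1"
  assumes "p1 = p0+q0" "q1 = X*q0" "p2 = p1" "q2 = X*(p1+q1)" "p3 = p2+q2" "q3 = X*q2" "p4 = p3" "q4 = X*(p3+q3)"
  shows "p4+q4 = (1+X+X*X)*(p2+q2) - X*X*(p0+q0)"
  unfolding assms by (simp add: algebra_simps)

lemma evenrec: assumes "k \<ge> 1"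
  shows "R (2*k+4) = [:1, 1, 1:] * R (2*k+2) - monom 1 2 * R (2*k)"
proof -
  let ?n = "2*k"
  have a: "PP (Suc ?n) = PP ?n" "QQ (Suc ?n) = monom 1 1 * (PP ?n + QQ ?n)"
    using down[of ?n] assms by auto
  have b: "PP (Suc (Suc ?n)) = PP (Suc ?n) + QQ (Suc ?n)" "QQ (Suc (Suc ?n)) = monom 1 1 * QQ (Suc ?n)"
    using up[of "Suc ?n"] assms by auto
  have c: "PP (Suc (Suc (Suc ?n))) = PP (Suc (Suc ?n))" "QQ (Suc (Suc (Suc ?n))) = monom 1 1 * (PP (Suc (Suc ?n)) + QQ (Suc (Suc ?n)))"
    using down[of "Suc (Suc ?n)"] assms by auto
  have d: "PP (Suc (Suc (Suc (Suc ?n)))) = PP (Suc (Suc (Suc ?n))) + QQ (Suc (Suc (Suc ?n)))" "QQ (Suc (Suc (Suc (Suc ?n)))) = monom 1 1 * QQ (Suc (Suc (Suc ?n)))"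
    using up[of "Suc (Suc (Suc ?n))"] assms by auto
  have e: "2*k+4 = Suc (Suc (Suc (Suc ?n)))" "2*k+2 = Suc (Suc ?n)" by simp_all
  show ?thesis unfolding e R_PQ polys by (rule rec_du[OF a b c d])
qed

lemma oddrec: assumes "k \<ge> 1"
  shows "R (2*k+5) = [:1, 1, 1:] * R (2*k+3) - monom 1 2 * R (2*k+1)"
proof -
  let ?n = "2*k+1"
  have a: "PP (Suc ?n) = PP ?n + QQ ?n" "QQ (Suc ?n) = monom 1 1 * QQ ?n"
    using up[of ?n] assms by auto
  have b: "PP (Suc (Suc ?n)) = PP (Suc ?n)" "QQ (Suc (Suc ?n)) = monom 1 1 * (PP (Suc ?n) + QQ (Suc ?n))"
    using down[of "Suc ?n"] assms by auto
  have c: "PP (Suc (Suc (Suc ?n))) = PP (Suc (Suc ?n)) + QQ (Suc (Suc ?n))" "QQ (Suc (Suc (Suc ?n))) = monom 1 1 * QQ (Suc (Suc ?n))"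
    using up[of "Suc (Suc ?n)"] assms by auto
  have d: "PP (Suc (Suc (Suc (Suc ?n)))) = PP (Suc (Suc (Suc ?n)))" "QQ (Suc (Suc (Suc (Suc ?n)))) = monom 1 1 * (PP (Suc (Suc (Suc ?n))) + QQ (Suc (Suc (Suc ?n))))"
    using down[of "Suc (Suc (Suc ?n))"] assms by auto
  have e: "2*k+5 = Suc (Suc (Suc (Suc ?n)))" "2*k+3 = Suc (Suc ?n)" by simp_all
  show ?thesis unfolding e R_PQ polys by (rule rec_ud[OF a b c d])
qed

theorem mainTheorem3:
  fixes m :: nat
  assumes "m \<ge> 3"
  shows "A m = [:1, 1, 1:] * A (m - 1) - monom 1 2 * A (m - 2) \<and>
         B m = [:1, 1, 1:] * B (m - 1) - monom 1 2 * B (m - 2)"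
proof -
  obtain k where k: "m = k + 2" "k \<ge> 1" proof
    show "m = (m - 2) + 2" "m - 2 \<ge> 1" using assms by auto
  qed
  have 1: "2*m = 2*k+4" "2*(m-1) = 2*k+2" "2*(m-2) = 2*k" using k by simp_all
  have 2: "2*m+1 = 2*k+5" "2*(m-1)+1 = 2*k+3" "2*(m-2)+1 = 2*k+1" using k by simp_all
  show ?thesis unfolding A_def B_def unfolding 2 unfolding 1 by (rule conjI[OF evenrec[OF k(2)] oddrec[OF k(2)]])
qed

end
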